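(* Let $F$ be a $3$-graph such that for every vertex $v\in V(F)$ there exists a vertex $u\in V(F)\setminus\{v\}$ with $N_F(v)\cap N_F(u)\neq\emptyset$. Then for every $p\in(0,1)$ and every $\mu>0$ there exist $n_0\in\mathbb{N}$ and $\alpha>0$ such that for every $n\ge n_0$ there exists an $(n,p,\mu,\cdot)$ $3$-graph $H$ with $\delta_1(H)\ge \alpha n^2$ that has no $F$-factor.
   Context: A $k$-graph $H=(V(H),E(H))$ has edge set $E(H)\subseteq\binom{V(H)}{k}$. For $S\subseteq V(H)$ with $1\le |S|\le k-1$, $N_H(S)=\{S'\in\binom{V(H)}{k-|S|}: S\cup S'\in E(H)\}$ and $\deg_H(S)=|N_H(S)|$; for a vertex $v$, $N_H(v)=N_H(\{v\})$ (so in a $3$-graph $N_H(v)$ is a set of pairs). $\delta_s(H)$ is the minimum of $\deg_H(S)$ over all $s$-subsets $S$ of $V(H)$. An $F$-factor in $H$ is a set of vertex-disjoint copies of $F$ in $H$ covering $V(H)$. An $(n,p,\mu,\cdot)$ $k$-graph is a $k$-graph $H$ on a vertex set $V$ with $|V|=n$ such that for all $X_1,\dots,X_k\subseteq V$, the number of $k$-tuples $(x_1,\dots,x_k)\in X_1\times\cdots\times X_k$ with $\{x_1,\dots,x_k\}\in E(H)$ is at least $p|X_1|\cdots|X_k|-\mu n^k$. *)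

theory Defs
  imports Complex_Main "HOL-Library.FuncSet"
begin

definition kgraph :: "nat \<Rightarrow> 'a set \<Rightarrow> 'a set set \<Rightarrow> bool" where
  "kgraph k V E \<longleftrightarrow> finite V \<and> (\<forall>e\<in>E. e \<subseteq> V \<and> card e = k)"

definition nbhd :: "nat \<Rightarrow> 'a set \<Rightarrow> 'a set set \<Rightarrow> 'a set \<Rightarrow> 'a set set" where
  "nbhd k V E S = {S'. S' \<subseteq> V \<and> card S' = k - card S \<and> S \<union> S' \<in> E}"

definition deg :: "nat \<Rightarrow> 'a set \<Rightarrow> 'a set set \<Rightarrow> 'a set \<Rightarrow> nat" where
  "deg k V E S = card (nbhd k V E S)"

definition min_deg :: "nat \<Rightarrow> nat \<Rightarrow> 'a set \<Rightarrow> 'a set set \<Rightarrow> nat" where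
  "min_deg k s V E = Min ((\<lambda>S. deg k V E S) ` {S. S \<subseteq> V \<and> card S = s})"

definition embedding :: "'a set \<Rightarrow> 'a set set \<Rightarrow> 'b set \<Rightarrow> 'b set set \<Rightarrow> ('a \<Rightarrow> 'b) \<Rightarrow> bool" where
  "embedding VF EF VH EH \<phi> \<longleftrightarrow> \<phi> \<in> VF \<rightarrow> VH \<and> inj_on \<phi> VF \<and> (\<forall>e\<in>EF. \<phi> ` e \<in> EH)"

definition has_factor :: "'a set \<Rightarrow> 'a set set \<Rightarrow> 'b set \<Rightarrow> 'b set set \<Rightarrow> bool" where
  "has_factor VF EF VH EH \<longleftrightarrow>
     (\<exists>\<C>. (\<forall>\<phi>\<in>\<C>. embedding VF EF VH EH \<phi>) \<and>
          (\<forall>\<phi>\<in>\<C>. \<forall>\<psi>\<in>\<C>. \<phi> ` VF \<inter> \<psi> ` VF \<noteq> {} \<longrightarrow> \<phi> ` VF = \<psi> ` VF) \<and>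
          (\<Union>\<phi>\<in>\<C>. \<phi> ` VF) = VH)"

definition pmu3 :: "nat \<Rightarrow> real \<Rightarrow> real \<Rightarrow> 'a set \<Rightarrow> 'a set set \<Rightarrow> bool" where
  "pmu3 n p \<mu> V E \<longleftrightarrow> kgraph 3 V E \<and> card V = n \<and>
     (\<forall>X1 X2 X3. X1 \<subseteq> V \<longrightarrow> X2 \<subseteq> V \<longrightarrow> X3 \<subseteq> V \<longrightarrow>
        real (card {(x1, x2, x3). x1 \<in> X1 \<and> x2 \<in> X2 \<and> x3 \<in> X3 \<and> {x1, x2, x3} \<in> E})
          \<ge> p * real (card X1) * real (card X2) * real (card X3) - \<mu> * real n ^ 3)"

end

theory Submission
  imports Defs
begin

definition HS :: "nat \<Rightarrow> nat set" where "HS t = {1..2*t}"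
definition HE :: "nat \<Rightarrow> nat \<Rightarrow> nat set set" where
  "HE n t = {e. e \<subseteq> {0..<n} \<and> card e = 3 \<and>
     ((0 \<in> e \<and> e \<subseteq> insert 0 (HS t)) \<or> (0 \<notin> e \<and> (\<forall>y\<in>e \<inter> HS t. \<forall>z\<in>e \<inter> HS t. y = z)))}"

lemma HE_kgraph: "kgraph 3 {0..<n} (HE n t)"
  unfolding kgraph_def HE_def by blast

lemma HE_D:
  assumes "e \<in> HE n t"
  shows "(0 \<in> e \<and> e \<subseteq> insert 0 (HS t)) \<or> (0 \<notin> e \<and> (\<forall>y\<in>e \<inter> HS t. \<forall>z\<in>e \<inter> HS t. y = z))"
  using assms unfolding HE_def by (rule CollectE) (elim conjE)

lemma HE_nofactor:
  fixes VF :: "'a set" and EF :: "'a set set"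
  assumes kg: "kgraph 3 VF EF"
    and hyp: "\<forall>v\<in>VF. \<exists>u\<in>VF - {v}. nbhd 3 VF EF {v} \<inter> nbhd 3 VF EF {u} \<noteq> {}"
    and n: "0 < n"
  shows "\<not> has_factor VF EF {0..<n} (HE n t)"
proof
  assume hf: "has_factor VF EF {0..<n} (HE n t)"
  obtain C where C: "(\<forall>\<phi>\<in>C. embedding VF EF {0..<n} (HE n t) \<phi>) \<and>
          (\<forall>\<phi>\<in>C. \<forall>\<psi>\<in>C. \<phi> ` VF \<inter> \<psi> ` VF \<noteq> {} \<longrightarrow> \<phi> ` VF = \<psi> ` VF) \<and>
          (\<Union>\<phi>\<in>C. \<phi> ` VF) = {0..<n}"
    using hf unfolding has_factor_def by (elim exE)
  have emb: "\<forall>\<phi>\<in>C. embedding VF EF {0..<n} (HE n t) \<phi>" using C by (rule conjunct1)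
  have cov: "(\<Union>\<phi>\<in>C. \<phi> ` VF) = {0..<n}" using C by (elim conjE)
  have "0 \<in> (\<Union>\<phi>\<in>C. \<phi> ` VF)" using cov n by simp
  then obtain \<phi> v where phC: "\<phi> \<in> C" and v: "v \<in> VF" and pv: "\<phi> v = 0" by auto
  have "embedding VF EF {0..<n} (HE n t) \<phi>" using emb phC by blast
  then have inj: "inj_on \<phi> VF" and ed: "\<forall>e\<in>EF. \<phi> ` e \<in> HE n t"
    unfolding embedding_def by blast+
  from hyp v obtain u where u: "u \<in> VF" "u \<noteq> v"
    and uu: "nbhd 3 VF EF {v} \<inter> nbhd 3 VF EF {u} \<noteq> {}" by blast
  from uu obtain S' where S1: "S' \<in> nbhd 3 VF EF {v}" and S2: "S' \<in> nbhd 3 VF EF {u}" by blast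
  have S1': "S' \<subseteq> VF \<and> card S' = 3 - card {v} \<and> {v} \<union> S' \<in> EF"
    using S1 unfolding nbhd_def by (rule CollectD)
  have S2': "S' \<subseteq> VF \<and> card S' = 3 - card {u} \<and> {u} \<union> S' \<in> EF"
    using S2 unfolding nbhd_def by (rule CollectD)
  have S'V: "S' \<subseteq> VF" using S1' by blast
  have cS: "card S' = 2" using S1' by simp
  have ev: "insert v S' \<in> EF" using S1' by simp
  have eu: "insert u S' \<in> EF" using S2' by simp
  from cS obtain x y where xy: "S' = {x,y}" "x \<noteq> y" unfolding card_2_iff by blast
  have xyV: "x \<in> VF" "y \<in> VF" using S'V xy by auto
  have ke: "\<forall>e\<in>EF. card e = 3" using kg unfolding kgraph_def by blast
  have c3: "card (insert v {x,y}) = 3" "card (insert u {x,y}) = 3"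
    using ke ev eu unfolding xy by blast+
  have vn: "v \<notin> {x,y}"
  proof
    assume "v \<in> {x,y}" then have "insert v {x,y} = {x,y}" by auto
    then show False using c3 xy by simp
  qed
  have un: "u \<notin> {x,y}"
  proof
    assume "u \<in> {x,y}" then have "insert u {x,y} = {x,y}" by auto
    then show False using c3 xy by simp
  qed
  have px1: "\<phi> x \<noteq> 0" using inj_on_eq_iff[OF inj xyV(1) v] vn pv by auto
  have px2: "\<phi> y \<noteq> 0" using inj_on_eq_iff[OF inj xyV(2) v] vn pv by auto
  have px3: "\<phi> u \<noteq> 0" using inj_on_eq_iff[OF inj u(1) v] u(2) pv by auto
  have px4: "\<phi> x \<noteq> \<phi> y" using inj_on_eq_iff[OF inj xyV(1) xyV(2)] xy(2) by auto
  have "\<phi> ` insert v S' \<in> HE n t" using ed ev by blast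
  then have e1: "{0, \<phi> x, \<phi> y} \<in> HE n t" using xy pv by simp
  have "\<phi> ` insert u S' \<in> HE n t" using ed eu by blast
  then have e2: "{\<phi> u, \<phi> x, \<phi> y} \<in> HE n t" using xy by simp
  have "{0, \<phi> x, \<phi> y} \<subseteq> insert 0 (HS t)"
    using HE_D[OF e1]
  proof (elim disjE)
    assume "0 \<in> {0, \<phi> x, \<phi> y} \<and> {0, \<phi> x, \<phi> y} \<subseteq> insert 0 (HS t)"
    then show ?thesis by (rule conjunct2)
  next
    assume "0 \<notin> {0, \<phi> x, \<phi> y} \<and> (\<forall>a\<in>{0, \<phi> x, \<phi> y} \<inter> HS t. \<forall>b\<in>{0, \<phi> x, \<phi> y} \<inter> HS t. a = b)"
    then show ?thesis by simp
  qed
  then have hs: "\<phi> x \<in> HS t" "\<phi> y \<in> HS t" using px1 px2 by auto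
  have h0: "0 \<notin> {\<phi> u, \<phi> x, \<phi> y}" using px1 px2 px3 by (metis empty_iff insertE)
  have "\<forall>a\<in>{\<phi> u, \<phi> x, \<phi> y} \<inter> HS t. \<forall>b\<in>{\<phi> u, \<phi> x, \<phi> y} \<inter> HS t. a = b"
    using HE_D[OF e2]
  proof (elim disjE)
    assume a: "0 \<in> {\<phi> u, \<phi> x, \<phi> y} \<and> {\<phi> u, \<phi> x, \<phi> y} \<subseteq> insert 0 (HS t)"
    from a have "0 \<in> {\<phi> u, \<phi> x, \<phi> y}" by (rule conjunct1)
    with h0 show ?thesis by (rule notE)
  next
    assume "0 \<notin> {\<phi> u, \<phi> x, \<phi> y} \<and> (\<forall>a\<in>{\<phi> u, \<phi> x, \<phi> y} \<inter> HS t. \<forall>b\<in>{\<phi> u, \<phi> x, \<phi> y} \<inter> HS t. a = b)"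
    then show ?thesis by (rule conjunct2)
  qed
  note all = this
  have mx: "\<phi> x \<in> {\<phi> u, \<phi> x, \<phi> y} \<inter> HS t" using hs(1) by simp
  have my: "\<phi> y \<in> {\<phi> u, \<phi> x, \<phi> y} \<inter> HS t" using hs(2) by simp
  have "\<phi> x = \<phi> y" using bspec[OF bspec[OF all mx] my] .
  with px4 show False by (rule notE)
qed

lemma nbhd_lower:
  fixes x :: nat and A B :: "nat set"
  assumes "A \<inter> B = {}" "A \<subseteq> {0..<n}" "B \<subseteq> {0..<n}"
    and "\<And>y z. y \<in> A \<Longrightarrow> z \<in> B \<Longrightarrow> {x,y,z} \<in> E"
  shows "card A * card B \<le> deg 3 {0..<n} E {x}"
proof -
  let ?f = "\<lambda>(y,z). {y,z::nat}"
  have inj: "inj_on ?f (A \<times> B)"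
    using assms(1) by (auto simp: inj_on_def doubleton_eq_iff)
  have sub: "?f ` (A \<times> B) \<subseteq> nbhd 3 {0..<n} E {x}"
  proof
    fix S assume "S \<in> ?f ` (A \<times> B)"
    then obtain a b where ab: "a \<in> A" "b \<in> B" "S = {a,b}" by auto
    then have "a \<noteq> b" using assms(1) by auto
    then show "S \<in> nbhd 3 {0..<n} E {x}" using ab assms by (auto simp: nbhd_def)
  qed
  have fin: "finite (nbhd 3 {0..<n} E {x})"
    by (rule finite_subset[of _ "Pow {0..<n}"]) (auto simp: nbhd_def)
  have "card A * card B = card (?f ` (A \<times> B))"
    using inj by (simp add: card_image card_cartesian_product)
  also have "\<dots> \<le> card (nbhd 3 {0..<n} E {x})" using card_mono[OF fin sub] .
  finally show ?thesis unfolding deg_def .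
qed

lemma HE_mindeg:
  assumes "4*t < n"
  shows "t * t \<le> min_deg 3 1 {0..<n} (HE n t)"
proof -
  have fin: "finite {S. S \<subseteq> {0..<n::nat} \<and> card S = 1}"
    by (rule finite_subset[of _ "Pow {0..<n}"]) auto
  have ne: "{S. S \<subseteq> {0..<n::nat} \<and> card S = 1} \<noteq> {}"
    using assms by (auto intro!: exI[of _ "{0}"])
  have "t * t \<le> deg 3 {0..<n} (HE n t) S" if S: "S \<subseteq> {0..<n}" "card S = 1" for S
  proof -
    from S obtain x where Sx: "S = {x}" "x < n" by (auto simp: card_1_singleton_iff)
    consider "x = 0" | "1 \<le> x \<and> x \<le> 2*t" | "2*t < x" by linarith
    then show ?thesis
    proof cases
      case 1
      have "card {1..t} * card {t+1..2*t} \<le> deg 3 {0..<n} (HE n t) {x}"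
        by (rule nbhd_lower) (use assms 1 in \<open>auto simp: HE_def HS_def\<close>)
      then show ?thesis using Sx by simp
    next
      case 2
      have "card {2*t+1..3*t} * card {3*t+1..4*t} \<le> deg 3 {0..<n} (HE n t) {x}"
        by (rule nbhd_lower) (use assms 2 in \<open>auto simp: HE_def HS_def\<close>)
      then show ?thesis using Sx by simp
    next
      case 3
      define B where "B = (if x \<in> {2*t+1..3*t} then {3*t+1..4*t} else {2*t+1..3*t})"
      have cB: "card B = t" unfolding B_def by auto
      have "card {1..t} * card B \<le> deg 3 {0..<n} (HE n t) {x}"
        by (rule nbhd_lower) (use assms 3 Sx in \<open>auto simp: HE_def HS_def B_def split: if_splits\<close>)
      then show ?thesis using Sx cB by simp
    qed
  qed
  then show ?thesis unfolding min_deg_def using fin ne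
    by (subst Min_ge_iff) auto
qed

lemma HE_count:
  assumes X: "X1 \<subseteq> {0..<n}" "X2 \<subseteq> {0..<n}" "X3 \<subseteq> {0..<n}"
  shows "card X1 * card X2 * card X3 \<le>
    card {(x1, x2, x3). x1 \<in> X1 \<and> x2 \<in> X2 \<and> x3 \<in> X3 \<and> {x1, x2, x3} \<in> HE n t}
    + (6 * n^2 + 3 * ((2*t) * (2*t) * n))"
proof -
  let ?V = "{0..<n::nat}" and ?S = "HS t"
  let ?G = "{(x1, x2, x3). x1 \<in> X1 \<and> x2 \<in> X2 \<and> x3 \<in> X3 \<and> {x1, x2, x3} \<in> HE n t}"
  define B1 where "B1 = (\<lambda>(a,c). (a,a,c)) ` (?V \<times> ?V)"
  define B2 where "B2 = (\<lambda>(a,b). (a,b,a)) ` (?V \<times> ?V)"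
  define B3 where "B3 = (\<lambda>(a,b). (a,b,b)) ` (?V \<times> ?V)"
  define B4 where "B4 = {0::nat} \<times> ?V \<times> ?V"
  define B5 where "B5 = ?V \<times> {0::nat} \<times> ?V"
  define B6 where "B6 = ?V \<times> ?V \<times> {0::nat}"
  define B7 where "B7 = ?S \<times> ?S \<times> ?V"
  define B8 where "B8 = ?S \<times> ?V \<times> ?S"
  define B9 where "B9 = ?V \<times> ?S \<times> ?S"
  have cS: "card ?S = 2*t" by (simp add: HS_def)
  have c1: "card B1 \<le> n^2" "card B2 \<le> n^2" "card B3 \<le> n^2"
    unfolding B1_def B2_def B3_def power2_eq_square
    using card_image_le[of "?V \<times> ?V" "\<lambda>(a,c). (a,a,c)"] card_image_le[of "?V \<times> ?V" "\<lambda>(a,b). (a,b,a)"]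
      card_image_le[of "?V \<times> ?V" "\<lambda>(a,b). (a,b,b)"]
    by (simp_all add: card_cartesian_product)
  have c2: "card B4 = n^2" "card B5 = n^2" "card B6 = n^2"
    unfolding B4_def B5_def B6_def power2_eq_square by (simp_all add: card_cartesian_product)
  have c3: "card B7 = (2*t)*(2*t)*n" "card B8 = (2*t)*(2*t)*n" "card B9 = (2*t)*(2*t)*n"
    unfolding B7_def B8_def B9_def using cS by (simp_all add: card_cartesian_product)
  have fins: "finite B1" "finite B2" "finite B3" "finite B4" "finite B5" "finite B6"
     "finite B7" "finite B8" "finite B9"
    unfolding B1_def B2_def B3_def B4_def B5_def B6_def B7_def B8_def B9_def
    by (auto simp: HS_def)
  have cover: "X1 \<times> X2 \<times> X3 \<subseteq> ?G \<union> (B1 \<union> B2 \<union> B3 \<union> B4 \<union> B5 \<union> B6 \<union> B7 \<union> B8 \<union> B9)"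
  proof
    fix w assume w: "w \<in> X1 \<times> X2 \<times> X3"
    then obtain a b c where abc: "w = (a,b,c)" "a \<in> X1" "b \<in> X2" "c \<in> X3" by auto
    then have V: "a < n" "b < n" "c < n" using X by auto
    show "w \<in> ?G \<union> (B1 \<union> B2 \<union> B3 \<union> B4 \<union> B5 \<union> B6 \<union> B7 \<union> B8 \<union> B9)"
    proof (cases "w \<in> B1 \<union> B2 \<union> B3 \<union> B4 \<union> B5 \<union> B6 \<union> B7 \<union> B8 \<union> B9")
      case True then show ?thesis by blast
    next
      case False
      have ne: "a \<noteq> b" "a \<noteq> c" "b \<noteq> c" "a \<noteq> 0" "b \<noteq> 0" "c \<noteq> 0"
      proof -
        have "(a,a,c) \<in> B1" unfolding B1_def using V by (auto intro!: image_eqI[of _ _ "(a,c)"])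
        moreover have "(a,b,a) \<in> B2" unfolding B2_def using V by (auto intro!: image_eqI[of _ _ "(a,b)"])
        moreover have "(a,b,b) \<in> B3" unfolding B3_def using V by (auto intro!: image_eqI[of _ _ "(a,b)"])
        ultimately show "a \<noteq> b" "a \<noteq> c" "b \<noteq> c" "a \<noteq> 0" "b \<noteq> 0" "c \<noteq> 0"
          using False abc V unfolding B4_def B5_def B6_def by auto
      qed
      have s: "\<not> (a \<in> ?S \<and> b \<in> ?S)" "\<not> (a \<in> ?S \<and> c \<in> ?S)" "\<not> (b \<in> ?S \<and> c \<in> ?S)"
        using False abc V unfolding B7_def B8_def B9_def by auto
      have "{a,b,c} \<in> HE n t" using ne s V unfolding HE_def by auto
      then show ?thesis using abc by auto
    qed
  qed
  have finG: "finite ?G"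
    by (rule finite_subset[of _ "?V \<times> ?V \<times> ?V"]) (use X in auto)
  have "card X1 * card X2 * card X3 = card (X1 \<times> X2 \<times> X3)"
    by (simp add: card_cartesian_product)
  also have "\<dots> \<le> card (?G \<union> (B1 \<union> B2 \<union> B3 \<union> B4 \<union> B5 \<union> B6 \<union> B7 \<union> B8 \<union> B9))"
    by (rule card_mono[OF _ cover]) (use finG fins in auto)
  also have "\<dots> \<le> card ?G + (card B1 + card B2 + card B3 + card B4 + card B5 + card B6 + card B7 + card B8 + card B9)"
  proof -
    have "card (B1 \<union> B2) \<le> card B1 + card B2" by (rule card_Un_le)
    moreover have "card (B1 \<union> B2 \<union> B3) \<le> card (B1 \<union> B2) + card B3" by (rule card_Un_le)
    moreover have "card (B1 \<union> B2 \<union> B3 \<union> B4) \<le> card (B1 \<union> B2 \<union> B3) + card B4" by (rule card_Un_le)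
    moreover have "card (B1 \<union> B2 \<union> B3 \<union> B4 \<union> B5) \<le> card (B1 \<union> B2 \<union> B3 \<union> B4) + card B5" by (rule card_Un_le)
    moreover have "card (B1 \<union> B2 \<union> B3 \<union> B4 \<union> B5 \<union> B6) \<le> card (B1 \<union> B2 \<union> B3 \<union> B4 \<union> B5) + card B6" by (rule card_Un_le)
    moreover have "card (B1 \<union> B2 \<union> B3 \<union> B4 \<union> B5 \<union> B6 \<union> B7) \<le> card (B1 \<union> B2 \<union> B3 \<union> B4 \<union> B5 \<union> B6) + card B7" by (rule card_Un_le)
    moreover have "card (B1 \<union> B2 \<union> B3 \<union> B4 \<union> B5 \<union> B6 \<union> B7 \<union> B8) \<le> card (B1 \<union> B2 \<union> B3 \<union> B4 \<union> B5 \<union> B6 \<union> B7) + card B8" by (rule card_Un_le)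
    moreover have "card (B1 \<union> B2 \<union> B3 \<union> B4 \<union> B5 \<union> B6 \<union> B7 \<union> B8 \<union> B9) \<le> card (B1 \<union> B2 \<union> B3 \<union> B4 \<union> B5 \<union> B6 \<union> B7 \<union> B8) + card B9" by (rule card_Un_le)
    moreover have "card (?G \<union> (B1 \<union> B2 \<union> B3 \<union> B4 \<union> B5 \<union> B6 \<union> B7 \<union> B8 \<union> B9)) \<le> card ?G + card (B1 \<union> B2 \<union> B3 \<union> B4 \<union> B5 \<union> B6 \<union> B7 \<union> B8 \<union> B9)" by (rule card_Un_le)
    ultimately show ?thesis by linarith
  qed
  also have "\<dots> \<le> card ?G + (6 * n^2 + 3 * ((2*t) * (2*t) * n))"
    using c1 c2 c3 by linarith
  finally show ?thesis .
qed

theorem mainTheorem1: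
  fixes VF :: "'a set" and EF :: "'a set set"
  assumes "kgraph 3 VF EF"
    and "\<forall>v\<in>VF. \<exists>u\<in>VF - {v}. nbhd 3 VF EF {v} \<inter> nbhd 3 VF EF {u} \<noteq> {}"
  shows "\<forall>p \<mu>. 0 < p \<and> p < 1 \<and> 0 < \<mu> \<longrightarrow>
     (\<exists>(n0::nat) (\<alpha>::real). \<alpha> > 0 \<and>
        (\<forall>n\<ge>n0. \<exists>(V::nat set) E. pmu3 n p \<mu> V E \<and>
            real (min_deg 3 1 V E) \<ge> \<alpha> * real n ^ 2 \<and>
            \<not> has_factor VF EF V E))"
proof (intro allI impI)
  fix p \<mu> :: real
  assume pm: "0 < p \<and> p < 1 \<and> 0 < \<mu>"
  define K :: nat where "K = nat \<lceil>24/\<mu>\<rceil> + 24"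
  define n0 :: nat where "n0 = 2*K + nat \<lceil>12/\<mu>\<rceil> + 1"
  define \<alpha> :: real where "\<alpha> = 1 / (4 * (real K)^2)"
  have K24: "K \<ge> 24" unfolding K_def by simp
  have Kmu: "real K * \<mu> \<ge> 24"
  proof -
    have "real K \<ge> 24/\<mu>" unfolding K_def by linarith
    then show ?thesis using pm by (simp add: field_simps)
  qed
  have "\<alpha> > 0" unfolding \<alpha>_def using K24 by simp
  moreover have "\<forall>n\<ge>n0. \<exists>(V::nat set) E. pmu3 n p \<mu> V E \<and>
            real (min_deg 3 1 V E) \<ge> \<alpha> * real n ^ 2 \<and> \<not> has_factor VF EF V E"
  proof (intro allI impI)
    fix n assume nn0: "n \<ge> n0"
    define t where "t = n div K"
    have tK: "t * K \<le> n" unfolding t_def by simp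
    have tK2: "n < t * K + K"
    proof -
      have "n = t * K + n mod K" unfolding t_def by simp
      moreover have "n mod K < K" using K24 by simp
      ultimately show ?thesis by linarith
    qed
    have n2K: "2 * K \<le> n" using nn0 unfolding n0_def by simp
    have nmu: "real n * \<mu> \<ge> 12"
    proof -
      have "real n \<ge> 12/\<mu>" using nn0 unfolding n0_def by linarith
      then show ?thesis using pm by (simp add: field_simps)
    qed
    have npos: "0 < n" using nn0 unfolding n0_def by simp
    have t4: "4 * t < n"
    proof -
      have "24 * t \<le> t * K" using K24 by simp
      then show ?thesis using tK npos by linarith
    qed
    have nf: "\<not> has_factor VF EF {0..<n} (HE n t)"
      by (rule HE_nofactor[OF assms npos])
    have md: "t * t \<le> min_deg 3 1 {0..<n} (HE n t)" by (rule HE_mindeg[OF t4])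
    have rtK: "real n \<le> 2 * real t * real K"
    proof -
      have "real n < real t * real K + real K" using tK2 by (simp only: of_nat_add[symmetric] of_nat_mult[symmetric] of_nat_less_iff)
      moreover have "2 * real K \<le> real n" using n2K by simp
      ultimately show ?thesis by linarith
    qed
    have "\<alpha> * real n ^ 2 \<le> real t * real t"
    proof -
      have "real n ^ 2 \<le> (2 * real t * real K)^2"
        using rtK by (intro power_mono) auto
      then have "real n ^ 2 \<le> 4 * (real K)^2 * (real t * real t)"
        by (simp add: power2_eq_square algebra_simps)
      then show ?thesis unfolding \<alpha>_def using K24 by (simp add: field_simps)
    qed
    also have "\<dots> \<le> real (min_deg 3 1 {0..<n} (HE n t))"
      using md by (simp only: of_nat_mult[symmetric] of_nat_le_iff)
    finally have mdr: "\<alpha> * real n ^ 2 \<le> real (min_deg 3 1 {0..<n} (HE n t))" .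
    have bad: "real (6 * n^2 + 3 * ((2*t) * (2*t) * n)) \<le> \<mu> * real n ^ 3"
    proof -
      have rtK': "real t * real K \<le> real n" using tK by (simp only: of_nat_mult[symmetric] of_nat_le_iff)
      have a: "6 * real n ^ 2 \<le> \<mu> * real n ^ 3 / 2"
      proof -
        have "12 * real n ^ 2 \<le> (real n * \<mu>) * real n ^ 2"
          using nmu by (intro mult_right_mono) auto
        then show ?thesis by (simp add: power3_eq_cube power2_eq_square algebra_simps)
      qed
      have b: "12 * (real t)^2 * real n \<le> \<mu> * real n ^ 3 / 2"
      proof -
        have "(real t * real K)^2 \<le> (real n)^2" using rtK' by (intro power_mono) auto
        then have c: "(real t)^2 * (real K)^2 \<le> (real n)^2" by (simp add: power_mult_distrib)
        have "24 \<le> (real K)^2 * \<mu>"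
        proof -
          have "24 * 1 \<le> (real K * \<mu>) * real K" using Kmu K24
            by (intro mult_mono) auto
          then show ?thesis by (simp add: power2_eq_square algebra_simps)
        qed
        then have "24 * ((real t)^2 * real n) \<le> ((real K)^2 * \<mu>) * ((real t)^2 * real n)"
          by (intro mult_right_mono) auto
        also have "\<dots> = \<mu> * real n * ((real t)^2 * (real K)^2)" by (simp add: algebra_simps)
        also have "\<dots> \<le> \<mu> * real n * (real n)^2"
          using c pm by (intro mult_left_mono) auto
        finally show ?thesis by (simp add: power3_eq_cube power2_eq_square algebra_simps)
      qed
      have "real (6 * n^2 + 3 * ((2*t) * (2*t) * n)) = 6 * real n ^ 2 + 12 * (real t)^2 * real n"
        by (simp add: power2_eq_square algebra_simps)
      then show ?thesis using a b by linarith
    qed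
    have pm3: "pmu3 n p \<mu> {0..<n} (HE n t)"
      unfolding pmu3_def
    proof (intro conjI allI impI)
      show "kgraph 3 {0..<n} (HE n t)" by (rule HE_kgraph)
      show "card {0..<n} = n" by simp
      fix X1 X2 X3 assume X: "X1 \<subseteq> {0..<n}" "X2 \<subseteq> {0..<n}" "X3 \<subseteq> {0..<n}"
      let ?G = "{(x1, x2, x3). x1 \<in> X1 \<and> x2 \<in> X2 \<and> x3 \<in> X3 \<and> {x1, x2, x3} \<in> HE n t}"
      have "card X1 * card X2 * card X3 \<le> card ?G + (6 * n^2 + 3 * ((2*t) * (2*t) * n))"
        by (rule HE_count[OF X])
      then have h0: "real (card X1 * card X2 * card X3) \<le> real (card ?G + (6 * n^2 + 3 * ((2*t) * (2*t) * n)))"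
        by (simp only: of_nat_le_iff)
      have h: "real (card X1) * real (card X2) * real (card X3) \<le> real (card ?G) + real (6 * n^2 + 3 * ((2*t) * (2*t) * n))"
        using h0 by (simp only: of_nat_add of_nat_mult)
      have "p * real (card X1) * real (card X2) * real (card X3) \<le> real (card X1) * real (card X2) * real (card X3)"
        using pm by (simp add: mult_left_le_one_le mult.assoc)
      then show "real (card ?G) \<ge> p * real (card X1) * real (card X2) * real (card X3) - \<mu> * real n ^ 3"
        using h bad by linarith
    qed
    show "\<exists>(V::nat set) E. pmu3 n p \<mu> V E \<and>
            real (min_deg 3 1 V E) \<ge> \<alpha> * real n ^ 2 \<and> \<not> has_factor VF EF V E"
      using pm3 mdr nf by blast
  qed
  ultimately show "\<exists>(n0::nat) (\<alpha>::real). \<alpha> > 0 \<and>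
        (\<forall>n\<ge>n0. \<exists>(V::nat set) E. pmu3 n p \<mu> V E \<and>
            real (min_deg 3 1 V E) \<ge> \<alpha> * real n ^ 2 \<and> \<not> has_factor VF EF V E)"
    by blast
qed

end
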